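(* Let $m$ be a positive integer and $\mathcal{N}_r$ the gadget of size $m$. Every $\mathcal{H}^{(\ast)}$-partition of $\mathcal{N}_r$ has size at least $m+1$. Moreover, there exist exactly two $\mathcal{H}^{(m+1)}$-partitions of $\mathcal{N}_r$, namely $\mathcal{L}_r=\{\{r_{i,0},r_{i,1},\dots,r_{i,m}\}:0\le i\le m\}$ and $\mathcal{R}_r=\{\{r_{0,i},r_{1,i},\dots,r_{m,i}\}:0\le i\le m\}$.
   Context: The gadget $\mathcal{N}_r=\langle\mathcal{V}_r,\mathcal{E}_r\rangle$ of size $m$ has vertex set $\mathcal{V}_r=\{r_{i,j}:0\le i,j\le m\}$ and arc set $\mathcal{E}_r=\{\langle r_{i,j},r_{i,j+1}\rangle:0\le i\le m,\ 0\le j<m\}\cup\{\langle r_{i,j},r_{i+1,j}\rangle:0\le i<m,\ 0\le j\le m\}$; it is a DAG. For a DAG $G$, a partition $\pi$ of its vertex set is an $\mathcal{H}^{(k)}$-partition if $|\pi|=k$, every induced subgraph $G[P]$, $P\in\pi$, has a directed Hamiltonian path, and the quotient digraph $G/\pi$ (vertex set $\pi$, arc $\langle P,Q\rangle$ for $P\ne Q$ whenever some arc of $G$ goes from $P$ to $Q$) is acyclic; an $\mathcal{H}^{(\ast)}$-partition is an $\mathcal{H}^{(k)}$-partition for some $k$. *)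

theory Defs
  imports Main "HOL-Library.Disjoint_Sets"
begin

definition gadget_V :: "nat \<Rightarrow> (nat \<times> nat) set" where
  "gadget_V m = {0..m} \<times> {0..m}"

definition gadget_E :: "nat \<Rightarrow> ((nat \<times> nat) \<times> (nat \<times> nat)) set" where
  "gadget_E m = {((i, j), (i, j + 1)) | i j. i \<le> m \<and> j < m}
              \<union> {((i, j), (i + 1, j)) | i j. i < m \<and> j \<le> m}"

definition has_ham_path :: "('a \<times> 'a) set \<Rightarrow> 'a set \<Rightarrow> bool" where
  "has_ham_path E P \<longleftrightarrow> (\<exists>xs. xs \<noteq> [] \<and> distinct xs \<and> set xs = P \<and>
      (\<forall>k. Suc k < length xs \<longrightarrow> (xs ! k, xs ! Suc k) \<in> E))"

definition quotient_arcs :: "('a \<times> 'a) set \<Rightarrow> 'a set set \<Rightarrow> ('a set \<times> 'a set) set" where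
  "quotient_arcs E \<pi> = {(P, Q). P \<in> \<pi> \<and> Q \<in> \<pi> \<and> P \<noteq> Q \<and> (\<exists>u\<in>P. \<exists>v\<in>Q. (u, v) \<in> E)}"

definition H_partition :: "'a set \<Rightarrow> ('a \<times> 'a) set \<Rightarrow> nat \<Rightarrow> 'a set set \<Rightarrow> bool" where
  "H_partition V E k \<pi> \<longleftrightarrow> partition_on V \<pi> \<and> finite \<pi> \<and> card \<pi> = k \<and>
     (\<forall>P\<in>\<pi>. has_ham_path E P) \<and> acyclic (quotient_arcs E \<pi>)"

definition H_star_partition :: "'a set \<Rightarrow> ('a \<times> 'a) set \<Rightarrow> 'a set set \<Rightarrow> bool" where
  "H_star_partition V E \<pi> \<longleftrightarrow> (\<exists>k. H_partition V E k \<pi>)"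

definition gadget_L :: "nat \<Rightarrow> (nat \<times> nat) set set" where
  "gadget_L m = {{(i, j) | j. j \<le> m} | i. i \<le> m}"

definition gadget_R :: "nat \<Rightarrow> (nat \<times> nat) set set" where
  "gadget_R m = {{(j, i) | j. j \<le> m} | i. i \<le> m}"

end

theory Submission
  imports Defs
begin

lemma E_cases: "(u,v) \<in> gadget_E m \<Longrightarrow>
   (fst v = fst u \<and> snd v = Suc (snd u)) \<or> (fst v = Suc (fst u) \<and> snd v = snd u)"
  by (auto simp: gadget_E_def)

lemma E_V: "(u,v) \<in> gadget_E m \<Longrightarrow> u \<in> gadget_V m \<and> v \<in> gadget_V m"
  by (auto simp: gadget_E_def gadget_V_def)

lemma path_sum:
  assumes "\<forall>k. Suc k < length xs \<longrightarrow> (xs!k, xs!Suc k) \<in> gadget_E m" "k < length xs"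
  shows "fst (xs!k) + snd (xs!k) = fst (xs!0) + snd (xs!0) + k"
  using assms(2)
proof (induction k)
  case (Suc k)
  then have "(xs!k, xs!Suc k) \<in> gadget_E m" using assms(1) by auto
  from E_cases[OF this] Suc show ?case by auto
qed simp

lemma no_turn:
  assumes H: "H_partition (gadget_V m) (gadget_E m) n \<pi>" and P: "P \<in> \<pi>"
    and xs: "set xs = P" "\<forall>k. Suc k < length xs \<longrightarrow> (xs!k, xs!Suc k) \<in> gadget_E m"
    and k: "Suc (Suc k) < length xs"
  shows "(fst (xs!Suc k) = fst (xs!k)) = (fst (xs!Suc (Suc k)) = fst (xs!Suc k))"
proof (rule ccontr)
  assume ne: "\<not> ?thesis"
  define a where "a = xs!k"
  define b where "b = xs!Suc k"
  define c where "c = xs!Suc (Suc k)"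
  have ab: "(a,b) \<in> gadget_E m" using xs(2) k unfolding a_def b_def by auto
  have bc: "(b,c) \<in> gadget_E m" using xs(2) k unfolding c_def b_def by auto
  have cV: "c \<in> gadget_V m" using E_V[OF bc] by auto
  have part: "partition_on (gadget_V m) \<pi>" and acyc: "acyclic (quotient_arcs (gadget_E m) \<pi>)"
    using H by (auto simp: H_partition_def)
  have inP: "\<And>x. x \<in> P \<Longrightarrow> fst x + snd x = fst a + snd a + 1 \<Longrightarrow> x = b"
  proof -
    fix x assume "x \<in> P" "fst x + snd x = fst a + snd a + 1"
    then obtain l where l: "l < length xs" "x = xs!l" using xs(1) by (metis in_set_conv_nth)
    have "fst (xs!l) + snd (xs!l) = fst (xs!0) + snd (xs!0) + l" using path_sum[OF xs(2) l(1)] .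
    moreover have "fst a + snd a = fst (xs!0) + snd (xs!0) + k" unfolding a_def using path_sum[OF xs(2)] k by auto
    ultimately have "l = Suc k" using l \<open>fst x + snd x = _\<close> by auto
    then show "x = b" using l b_def by simp
  qed
  have aP: "a \<in> P" and cP: "c \<in> P" using xs(1) k a_def c_def by auto
  obtain w where w: "(a,w) \<in> gadget_E m" "(w,c) \<in> gadget_E m" "w \<notin> P"
  proof (cases "fst b = fst a")
    case True
    then have b: "b = (fst a, Suc (snd a))" using E_cases[OF ab] by (cases b) auto
    have c: "c = (Suc (fst a), Suc (snd a))" using ne True E_cases[OF bc] b unfolding a_def b_def c_def
      by (auto simp: prod_eq_iff)
    show ?thesis
    proof (rule that[of "(Suc (fst a), snd a)"])
      show "(a, Suc (fst a), snd a) \<in> gadget_E m" using cV c by (cases a) (auto simp: gadget_E_def gadget_V_def)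
      show "((Suc (fst a), snd a), c) \<in> gadget_E m" using cV c by (auto simp: gadget_E_def gadget_V_def)
      show "(Suc (fst a), snd a) \<notin> P" using inP b by fastforce
    qed
  next
    case False
    then have b: "b = (Suc (fst a), snd a)" using E_cases[OF ab] by (cases b) auto
    have c: "c = (Suc (fst a), Suc (snd a))" using ne False E_cases[OF bc] b unfolding a_def b_def c_def
      by (auto simp: prod_eq_iff)
    show ?thesis
    proof (rule that[of "(fst a, Suc (snd a))"])
      show "(a, fst a, Suc (snd a)) \<in> gadget_E m" using cV c by (cases a) (auto simp: gadget_E_def gadget_V_def)
      show "((fst a, Suc (snd a)), c) \<in> gadget_E m" using cV c by (auto simp: gadget_E_def gadget_V_def)
      show "(fst a, Suc (snd a)) \<notin> P" using inP b by fastforce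
    qed
  qed
  have "w \<in> gadget_V m" using E_V[OF w(2)] by auto
  then obtain Q where Q: "Q \<in> \<pi>" "w \<in> Q" using partition_onD1[OF part] by auto
  have "Q \<noteq> P" using Q w(3) by auto
  have "(P,Q) \<in> quotient_arcs (gadget_E m) \<pi>"
    unfolding quotient_arcs_def using P Q \<open>Q \<noteq> P\<close> aP w(1) by blast
  moreover have "(Q,P) \<in> quotient_arcs (gadget_E m) \<pi>"
    unfolding quotient_arcs_def using P Q \<open>Q \<noteq> P\<close> cP w(2) by blast
  ultimately have "(P,P) \<in> (quotient_arcs (gadget_E m) \<pi>)\<^sup>+" by auto
  then show False using acyc by (auto simp: acyclic_def)
qed

lemma straight:
  assumes H: "H_partition (gadget_V m) (gadget_E m) n \<pi>" and P: "P \<in> \<pi>"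
    and xs: "set xs = P" "\<forall>k. Suc k < length xs \<longrightarrow> (xs!k, xs!Suc k) \<in> gadget_E m"
  shows "(\<forall>l<length xs. fst (xs!l) = fst (xs!0)) \<or> (\<forall>l<length xs. snd (xs!l) = snd (xs!0))"
proof (cases "length xs \<le> 1")
  case True
  then have "\<forall>l<length xs. l = 0" by auto
  then show ?thesis by auto
next
  case False
  define h where "h = (fst (xs!1) = fst (xs!0))"
  have st: "\<forall>k. Suc k < length xs \<longrightarrow> (fst (xs!Suc k) = fst (xs!k)) = h"
  proof
    fix k show "Suc k < length xs \<longrightarrow> (fst (xs!Suc k) = fst (xs!k)) = h"
    proof (induction k)
      case 0 then show ?case by (simp add: h_def)
    next
      case (Suc k)
      then show ?case using no_turn[OF H P xs, of k] by auto
    qed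
  qed
  show ?thesis
  proof (cases h)
    case True
    have "\<forall>l<length xs. fst (xs!l) = fst (xs!0)"
    proof (intro allI impI)
      fix l assume "l < length xs" then show "fst (xs!l) = fst (xs!0)"
        using st True by (induction l) auto
    qed
    then show ?thesis ..
  next
    case False
    have "\<forall>l<length xs. snd (xs!l) = snd (xs!0)"
    proof (intro allI impI)
      fix l assume "l < length xs" then show "snd (xs!l) = snd (xs!0)"
      proof (induction l)
        case (Suc l)
        then have "(xs!l, xs!Suc l) \<in> gadget_E m" "fst (xs!Suc l) \<noteq> fst (xs!l)"
          using xs(2) st False by auto
        then show ?case using E_cases Suc by fastforce
      qed simp
    qed
    then show ?thesis ..
  qed
qed

lemma part_shape:
  assumes H: "H_partition (gadget_V m) (gadget_E m) n \<pi>" and P: "P \<in> \<pi>"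
  shows "(\<exists>a\<le>m. P \<subseteq> {a} \<times> {0..m}) \<or> (\<exists>b\<le>m. P \<subseteq> {0..m} \<times> {b})"
proof -
  obtain xs where xs: "xs \<noteq> []" "set xs = P" "\<forall>k. Suc k < length xs \<longrightarrow> (xs!k, xs!Suc k) \<in> gadget_E m"
    using H P by (auto simp: H_partition_def has_ham_path_def)
  have PV: "P \<subseteq> gadget_V m" using H P by (auto simp: H_partition_def partition_on_def)
  have x0: "xs!0 \<in> P" using xs by auto
  from straight[OF H P xs(2,3)] show ?thesis
  proof
    assume A: "\<forall>l<length xs. fst (xs!l) = fst (xs!0)"
    have "P \<subseteq> {fst (xs!0)} \<times> {0..m}"
      using A PV xs(2) by (force simp: gadget_V_def in_set_conv_nth)
    moreover have "fst (xs!0) \<le> m" using x0 PV by (auto simp: gadget_V_def)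
    ultimately show ?thesis by blast
  next
    assume A: "\<forall>l<length xs. snd (xs!l) = snd (xs!0)"
    have "P \<subseteq> {0..m} \<times> {snd (xs!0)}"
      using A PV xs(2) by (force simp: gadget_V_def in_set_conv_nth)
    moreover have "snd (xs!0) \<le> m" using x0 PV by (auto simp: gadget_V_def)
    ultimately show ?thesis by blast
  qed
qed

lemma part_card:
  assumes H: "H_partition (gadget_V m) (gadget_E m) n \<pi>" and P: "P \<in> \<pi>"
  shows "card P \<le> Suc m"
  using part_shape[OF H P]
proof
  assume "\<exists>a\<le>m. P \<subseteq> {a} \<times> {0..m}"
  then obtain a where "P \<subseteq> {a} \<times> {0..m}" by blast
  from card_mono[OF _ this] show ?thesis by (simp add: card_cartesian_product)
next
  assume "\<exists>a\<le>m. P \<subseteq> {0..m} \<times> {a}"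
  then obtain a where "P \<subseteq> {0..m} \<times> {a}" by blast
  from card_mono[OF _ this] show ?thesis by (simp add: card_cartesian_product)
qed

lemma sum_eq:
  assumes H: "H_partition (gadget_V m) (gadget_E m) n \<pi>"
  shows "sum card \<pi> = Suc m * Suc m" "finite \<pi>"
proof -
  have part: "partition_on (gadget_V m) \<pi>" and fin: "finite \<pi>" using H by (auto simp: H_partition_def)
  have "\<And>P. P \<in> \<pi> \<Longrightarrow> finite P"
    using partition_onD1[OF part] by (metis Union_upper finite_SigmaI finite_atLeastAtMost finite_subset gadget_V_def)
  then have "card (\<Union>\<pi>) = sum card \<pi>" using card_Union_disjoint partition_onD2[OF part] by blast
  moreover have "card (gadget_V m) = Suc m * Suc m" by (simp add: gadget_V_def card_cartesian_product)
  ultimately show "sum card \<pi> = Suc m * Suc m" using partition_onD1[OF part] by simp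
  show "finite \<pi>" by fact
qed

lemma lower:
  assumes H: "H_partition (gadget_V m) (gadget_E m) n \<pi>"
  shows "card \<pi> \<ge> Suc m"
proof -
  have "Suc m * Suc m = sum card \<pi>" using sum_eq[OF H] by simp
  also have "\<dots> \<le> sum (\<lambda>_. Suc m) \<pi>" using part_card[OF H] by (intro sum_mono) auto
  also have "\<dots> = card \<pi> * Suc m" by simp
  finally have "Suc m * Suc m \<le> card \<pi> * Suc m" .
  then show ?thesis by (metis mult_le_cancel2 zero_less_Suc)
qed

lemma L_eq: "gadget_L m = (\<lambda>a. {a} \<times> {0..m}) ` {0..m}"
  unfolding gadget_L_def by auto

lemma R_eq: "gadget_R m = (\<lambda>b. {0..m} \<times> {b}) ` {0..m}"
  unfolding gadget_R_def by auto

lemma L_H: "H_partition (gadget_V m) (gadget_E m) (Suc m) (gadget_L m)"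
  unfolding H_partition_def
proof (intro conjI ballI)
  show "partition_on (gadget_V m) (gadget_L m)"
    by (rule partition_onI) (auto simp: L_eq gadget_V_def disjnt_def)
  show "finite (gadget_L m)" by (simp add: L_eq)
  have "inj_on (\<lambda>a. {a} \<times> {0..m}) {0..m}" by (auto simp: inj_on_def)
  then show "card (gadget_L m) = Suc m" by (simp add: L_eq card_image)
  fix P assume "P \<in> gadget_L m"
  then obtain a where a: "a \<le> m" "P = {a} \<times> {0..m}" by (auto simp: L_eq)
  show "has_ham_path (gadget_E m) P" unfolding has_ham_path_def
    apply (rule exI[of _ "map (\<lambda>j. (a,j)) [0..<Suc m]"])
    using a by (auto simp: distinct_map inj_on_def gadget_E_def nth_append)
next
  define f where "f = (\<lambda>P::(nat\<times>nat) set. Min (fst ` P))"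
  have "quotient_arcs (gadget_E m) (gadget_L m) \<subseteq> inv_image less_than f"
  proof
    fix x assume "x \<in> quotient_arcs (gadget_E m) (gadget_L m)"
    then obtain P Q u v where x: "x = (P,Q)" "P \<in> gadget_L m" "Q \<in> gadget_L m" "P \<noteq> Q"
      "u \<in> P" "v \<in> Q" "(u,v) \<in> gadget_E m"
      unfolding quotient_arcs_def by (cases x) blast
    then obtain a b where "P = {a} \<times> {0..m}" "Q = {b} \<times> {0..m}" by (auto simp: L_eq)
    then show "x \<in> inv_image less_than f" using x
      by (auto simp: f_def fst_image_times gadget_E_def)
  qed
  then show "acyclic (quotient_arcs (gadget_E m) (gadget_L m))"
    by (rule acyclic_subset[OF wf_acyclic[OF wf_inv_image[OF wf_less_than]]])
qed

lemma R_H: "H_partition (gadget_V m) (gadget_E m) (Suc m) (gadget_R m)"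
  unfolding H_partition_def
proof (intro conjI ballI)
  show "partition_on (gadget_V m) (gadget_R m)"
    by (rule partition_onI) (auto simp: R_eq gadget_V_def disjnt_def)
  show "finite (gadget_R m)" by (simp add: R_eq)
  have "inj_on (\<lambda>b. {0..m} \<times> {b}) {0..m}" by (auto simp: inj_on_def)
  then show "card (gadget_R m) = Suc m" by (simp add: R_eq card_image)
  fix P assume "P \<in> gadget_R m"
  then obtain a where a: "a \<le> m" "P = {0..m} \<times> {a}" by (auto simp: R_eq)
  show "has_ham_path (gadget_E m) P" unfolding has_ham_path_def
    apply (rule exI[of _ "map (\<lambda>j. (j,a)) [0..<Suc m]"])
    using a by (auto simp: distinct_map inj_on_def gadget_E_def nth_append)
next
  define f where "f = (\<lambda>P::(nat\<times>nat) set. Min (snd ` P))"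
  have "quotient_arcs (gadget_E m) (gadget_R m) \<subseteq> inv_image less_than f"
  proof
    fix x assume "x \<in> quotient_arcs (gadget_E m) (gadget_R m)"
    then obtain P Q u v where x: "x = (P,Q)" "P \<in> gadget_R m" "Q \<in> gadget_R m" "P \<noteq> Q"
      "u \<in> P" "v \<in> Q" "(u,v) \<in> gadget_E m"
      unfolding quotient_arcs_def by (cases x) blast
    then obtain a b where "P = {0..m} \<times> {a}" "Q = {0..m} \<times> {b}" by (auto simp: R_eq)
    then show "x \<in> inv_image less_than f" using x
      by (auto simp: f_def snd_image_times gadget_E_def)
  qed
  then show "acyclic (quotient_arcs (gadget_E m) (gadget_R m))"
    by (rule acyclic_subset[OF wf_acyclic[OF wf_inv_image[OF wf_less_than]]])
qed

lemma full_shape: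
  assumes H: "H_partition (gadget_V m) (gadget_E m) (Suc m) \<pi>" and P: "P \<in> \<pi>"
  shows "(\<exists>a\<le>m. P = {a} \<times> {0..m}) \<or> (\<exists>b\<le>m. P = {0..m} \<times> {b})"
proof -
  have cpi: "card \<pi> = Suc m" using H by (simp add: H_partition_def)
  have cP: "card P = Suc m"
  proof (rule ccontr)
    assume "card P \<noteq> Suc m"
    then have "card P < Suc m" using part_card[OF H P] by simp
    then have "sum card \<pi> < sum (\<lambda>_. Suc m) \<pi>"
      using part_card[OF H] P sum_eq(2)[OF H] by (intro sum_strict_mono_ex1) auto
    then show False using sum_eq(1)[OF H] cpi by simp
  qed
  from part_shape[OF H P] show ?thesis
  proof
    assume "\<exists>a\<le>m. P \<subseteq> {a} \<times> {0..m}"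
    then obtain a where "a \<le> m" "P \<subseteq> {a} \<times> {0..m}" by blast
    moreover then have "P = {a} \<times> {0..m}"
      using cP by (intro card_subset_eq) (auto simp: card_cartesian_product)
    ultimately show ?thesis by blast
  next
    assume "\<exists>a\<le>m. P \<subseteq> {0..m} \<times> {a}"
    then obtain a where "a \<le> m" "P \<subseteq> {0..m} \<times> {a}" by blast
    moreover then have "P = {0..m} \<times> {a}"
      using cP by (intro card_subset_eq) (auto simp: card_cartesian_product)
    ultimately show ?thesis by blast
  qed
qed

lemma unique:
  assumes H: "H_partition (gadget_V m) (gadget_E m) (Suc m) \<pi>" and m: "m > 0"
  shows "\<pi> = gadget_L m \<or> \<pi> = gadget_R m"
proof -
  have part: "partition_on (gadget_V m) \<pi>" using H by (simp add: H_partition_def)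
  have dis: "\<And>P Q. P \<in> \<pi> \<Longrightarrow> Q \<in> \<pi> \<Longrightarrow> P \<noteq> Q \<Longrightarrow> P \<inter> Q = {}"
    using disjointD[OF partition_onD2[OF part]] by blast
  have nocross: False if "{a} \<times> {0..m} \<in> \<pi>" "{0..m} \<times> {b} \<in> \<pi>" "a \<le> m" "b \<le> m" for a b
  proof -
    have "(a, if b = 0 then 1 else 0) \<in> {a} \<times> {0..m}" using m by auto
    moreover have "(a, if b = 0 then 1 else 0) \<notin> {0..m} \<times> {b}" by auto
    ultimately have "{a} \<times> {0..m} \<noteq> {0..m} \<times> {b}" by blast
    moreover have "(a,b) \<in> ({a} \<times> {0..m}) \<inter> ({0..m} \<times> {b})" using that by auto
    ultimately show False using dis[OF that(1,2)] by blast
  qed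
  have cover: "\<exists>Q\<in>\<pi>. x \<in> Q" if "x \<in> gadget_V m" for x
    using partition_onD1[OF part] that by blast
  show ?thesis
  proof (cases "\<exists>a\<le>m. {a} \<times> {0..m} \<in> \<pi>")
    case True
    then obtain a where a: "a \<le> m" "{a} \<times> {0..m} \<in> \<pi>" by blast
    have rows: "\<exists>c\<le>m. Q = {c} \<times> {0..m}" if "Q \<in> \<pi>" for Q
      using full_shape[OF H that] nocross a that by blast
    have "\<pi> = gadget_L m"
    proof
      show "\<pi> \<subseteq> gadget_L m" using rows by (fastforce simp: L_eq)
      show "gadget_L m \<subseteq> \<pi>"
      proof
        fix R assume "R \<in> gadget_L m"
        then obtain c where c: "c \<le> m" "R = {c} \<times> {0..m}" by (auto simp: L_eq)
        then obtain Q where "Q \<in> \<pi>" "(c,0) \<in> Q" using cover[of "(c,0)"] by (auto simp: gadget_V_def)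
        moreover then obtain d where "Q = {d} \<times> {0..m}" using rows by blast
        ultimately show "R \<in> \<pi>" using c by auto
      qed
    qed
    then show ?thesis ..
  next
    case False
    have cols: "\<exists>c\<le>m. Q = {0..m} \<times> {c}" if "Q \<in> \<pi>" for Q
      using full_shape[OF H that] False that by blast
    have "\<pi> = gadget_R m"
    proof
      show "\<pi> \<subseteq> gadget_R m" using cols by (fastforce simp: R_eq)
      show "gadget_R m \<subseteq> \<pi>"
      proof
        fix R assume "R \<in> gadget_R m"
        then obtain c where c: "c \<le> m" "R = {0..m} \<times> {c}" by (auto simp: R_eq)
        then obtain Q where "Q \<in> \<pi>" "(0,c) \<in> Q" using cover[of "(0,c)"] by (auto simp: gadget_V_def)
        moreover then obtain d where "Q = {0..m} \<times> {d}" using cols by blast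
        ultimately show "R \<in> \<pi>" using c by auto
      qed
    qed
    then show ?thesis ..
  qed
qed

theorem lemma5p4:
  fixes m :: nat
  assumes "m > 0"
  shows "(\<forall>\<pi>. H_star_partition (gadget_V m) (gadget_E m) \<pi> \<longrightarrow> card \<pi> \<ge> m + 1)
       \<and> {\<pi>. H_partition (gadget_V m) (gadget_E m) (m + 1) \<pi>} = {gadget_L m, gadget_R m}
       \<and> gadget_L m \<noteq> gadget_R m"
proof (intro conjI allI impI)
  fix \<pi> assume "H_star_partition (gadget_V m) (gadget_E m) \<pi>"
  then show "card \<pi> \<ge> m + 1" using lower by (auto simp: H_star_partition_def)
next
  show "{\<pi>. H_partition (gadget_V m) (gadget_E m) (m + 1) \<pi>} = {gadget_L m, gadget_R m}"
    using unique[OF _ assms] L_H R_H by auto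
next
  have "{0} \<times> {0..m} \<in> gadget_L m" by (auto simp: L_eq)
  moreover have "{0} \<times> {0..m} \<notin> gadget_R m"
  proof
    assume "{0} \<times> {0..m} \<in> gadget_R m"
    then obtain b where "{0} \<times> {0..m} = {0..m} \<times> {b}" by (auto simp: R_eq)
    moreover have "(0,0) \<in> {0::nat} \<times> {0..m}" "(0,1) \<in> {0::nat} \<times> {0..m}" using assms by auto
    ultimately show False by auto
  qed
  ultimately show "gadget_L m \<noteq> gadget_R m" by blast
qed

end
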